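(* Let $n\ge 1$ agents all value every item at $1$, and consider any online algorithm that in every round $s$ outputs a contiguous allocation $A^s$ of $M_s$ satisfying $v(A^s_i)\ge\frac1n v(M_s)-\frac{n-1}{n}\max_{g\in M_s}v(g)$ for all $i$. Let $t\ge n^2$ and $i\in[n]$, and write $t=ki-r$ with $0\le r<i$. If $k\ge n$ and the number of rounds is at least $kn$, then in round $kn$ item $g_t$ is assigned to agent $i$; moreover in round $t$ item $g_t$ is assigned to agent $n$. Consequently, if the number of rounds is large enough, $g_t$ is assigned to every agent in some round.
   Context: Items $g_1,g_2,\dots$ arrive online on a line; $M_s=\{g_1,\dots,g_s\}$. A contiguous allocation of $M_s$ is $A_i=\{g_{p_{i-1}+1},\dots,g_{p_i}\}$ for some $0=p_0\le p_1\le\dots\le p_n=s$, i.e. agent $i$ receives the $i$-th block from the left. The valuation is additive and identical for all agents. *)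

theory Defs
  imports Complex_Main
begin

(* Items are identified with their indices: item g_j is j (j >= 1). *)

definition items :: "nat \<Rightarrow> nat set" where
  "items s = {1..s}"

definition v :: "nat \<Rightarrow> real" where
  "v g = 1"

definition val :: "nat set \<Rightarrow> real" where
  "val A = (\<Sum>g\<in>A. v g)"

(* cut points p 0 = 0 <= p 1 <= ... <= p n = s describe a contiguous allocation of M_s *)
definition contiguous_alloc :: "nat \<Rightarrow> nat \<Rightarrow> (nat \<Rightarrow> nat) \<Rightarrow> bool" where
  "contiguous_alloc n s p \<longleftrightarrow> p 0 = 0 \<and> p n = s \<and> (\<forall>j<n. p j \<le> p (Suc j))"

definition agent_block :: "(nat \<Rightarrow> nat) \<Rightarrow> nat \<Rightarrow> nat set" where
  "agent_block p i = {p (i - 1) + 1 .. p i}"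

definition valid_run :: "nat \<Rightarrow> nat \<Rightarrow> (nat \<Rightarrow> nat \<Rightarrow> nat) \<Rightarrow> bool" where
  "valid_run n T alg \<longleftrightarrow>
     (\<forall>s\<in>{1..T}. contiguous_alloc n s (alg s) \<and>
        (\<forall>i\<in>{1..n}. val (agent_block (alg s) i)
            \<ge> val (items s) / real n - (real n - 1) / real n * Max (v ` items s)))"

end

theory Submission
  imports Defs
begin

lemma block_bound:
  assumes "n \<ge> 1" "valid_run n T alg" "s \<in> {1..T}" "i \<in> {1..n}"
  shows "real n * real (alg s i - alg s (i-1)) \<ge> real s - real n + 1"
proof -
  have h: "val (agent_block (alg s) i)
            \<ge> val (items s) / real n - (real n - 1) / real n * Max (v ` items s)"
    using assms(2,3,4) unfolding valid_run_def by blast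
  have e1: "val (agent_block (alg s) i) = real (alg s i - alg s (i-1))"
    unfolding val_def agent_block_def v_def by simp
  have e2: "val (items s) = real s" unfolding val_def items_def v_def by simp
  have "v ` items s = {1}" using assms(3) unfolding items_def v_def by auto
  hence e3: "Max (v ` items s) = 1" by simp
  have np: "real n > 0" using assms(1) by simp
  have "real (alg s i - alg s (i-1)) \<ge> real s / real n - (real n - 1) / real n"
    using h e1 e2 e3 by simp
  hence "real n * real (alg s i - alg s (i-1)) \<ge> real n * (real s / real n - (real n - 1) / real n)"
    using np by (simp add: mult_left_mono)
  also have "real n * (real s / real n - (real n - 1) / real n) = real s - real n + 1"
    using np by (simp add: field_simps)
  finally show ?thesis .
qed

lemma round_kn:
  assumes "n \<ge> 1" "valid_run n T alg" "k \<ge> 1" "T \<ge> k * n"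
  shows "\<forall>i\<le>n. alg (k*n) i = k * i"
proof -
  let ?p = "alg (k*n)"
  have sT: "k*n \<in> {1..T}" using assms by simp
  have ca: "contiguous_alloc n (k*n) ?p" using assms(2) sT unfolding valid_run_def by blast
  have step: "?p j \<ge> ?p (j-1) + k" if "j \<in> {1..n}" for j
  proof -
    have b: "real n * real (?p j - ?p (j-1)) \<ge> real (k*n) - real n + 1"
      using block_bound[OF assms(1,2) sT that] .
    have "real n * real (?p j - ?p (j-1)) > real n * (real k - 1)"
      using b by (simp add: algebra_simps)
    hence "real (?p j - ?p (j-1)) > real k - 1" using assms(1)
      by (smt (verit) mult_left_mono of_nat_0_le_iff)
    hence "?p j - ?p (j-1) \<ge> k" by linarith
    thus ?thesis using assms(3) by linarith
  qed
  have gen: "?p m \<ge> ?p j + k * (m - j)" if "j \<le> m" "m \<le> n" for j m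
    using that
  proof (induction m)
    case 0 then show ?case by simp
  next
    case (Suc m)
    show ?case
    proof (cases "j = Suc m")
      case True then show ?thesis by simp
    next
      case False
      hence "j \<le> m" using Suc by simp
      hence ih: "?p m \<ge> ?p j + k * (m - j)" using Suc by simp
      have "?p (Suc m) \<ge> ?p m + k" using step[of "Suc m"] Suc by simp
      moreover have "k * (Suc m - j) = k * (m - j) + k" using \<open>j \<le> m\<close>
        by (simp add: Suc_diff_le)
      ultimately show ?thesis using ih by simp
    qed
  qed
  show ?thesis
  proof (intro allI impI)
    fix i assume i: "i \<le> n"
    have p0: "?p 0 = 0" and pn: "?p n = k*n" using ca unfolding contiguous_alloc_def by auto
    have a: "?p i \<ge> k * i" using gen[of 0 i] i p0 by simp
    have b: "?p n \<ge> ?p i + k * (n - i)" using gen[of i n] i by simp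
    have "k * n = k * i + k * (n - i)" using i by (simp add: add_mult_distrib2[symmetric])
    thus "?p i = k * i" using a b pn by linarith
  qed
qed

theorem mainTheorem7:
  fixes n t T :: nat and alg :: "nat \<Rightarrow> nat \<Rightarrow> nat"
  assumes "n \<ge> 1"
    and "valid_run n T alg"
    and "t \<ge> n ^ 2"
  shows "(\<forall>i\<in>{1..n}. \<forall>k r. t = k * i - r \<and> r < i \<and> k \<ge> n \<and> T \<ge> k * n
            \<longrightarrow> t \<in> agent_block (alg (k * n)) i)
       \<and> (t \<le> T \<longrightarrow> t \<in> agent_block (alg t) n)
       \<and> (T \<ge> n * t \<longrightarrow> (\<forall>i\<in>{1..n}. \<exists>s\<in>{1..T}. t \<in> agent_block (alg s) i))"
proof -
  have P1: "\<forall>i\<in>{1..n}. \<forall>k r. t = k * i - r \<and> r < i \<and> k \<ge> n \<and> T \<ge> k * n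
            \<longrightarrow> t \<in> agent_block (alg (k * n)) i"
  proof (intro ballI allI impI)
    fix i k r assume i: "i \<in> {1..n}" and h: "t = k * i - r \<and> r < i \<and> k \<ge> n \<and> T \<ge> k * n"
    have k1: "k \<ge> 1" using h assms(1) by simp
    have R: "\<forall>i\<le>n. alg (k*n) i = k * i" using round_kn[OF assms(1,2) k1] h by simp
    have e1: "alg (k*n) i = k * i" using R i by simp
    have e2: "alg (k*n) (i-1) = k * (i-1)" using R[rule_format, of "i-1"] i by fastforce
    have rk: "r < k" using h i by simp
    have "k * i = k * (i-1) + k" using i
      by (metis Suc_diff_1 atLeastAtMost_iff less_le_trans mult_Suc_right add.commute zero_less_one)
    thus "t \<in> agent_block (alg (k * n)) i"
      unfolding agent_block_def using e1 e2 rk h by auto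
  qed
  have P2: "t \<le> T \<longrightarrow> t \<in> agent_block (alg t) n"
  proof
    assume tT: "t \<le> T"
    have "n \<le> n^2" by (simp add: power2_eq_square)
    hence tn: "t \<ge> n" using assms(3) by simp
    have sT: "t \<in> {1..T}" using tT tn assms(1) by simp
    have b: "real n * real (alg t n - alg t (n-1)) \<ge> real t - real n + 1"
      using block_bound[OF assms(1,2) sT] assms(1) by simp
    have "real n * real (alg t n - alg t (n-1)) > 0" using b tn by (smt (verit) of_nat_le_iff)
    hence pos: "alg t n - alg t (n-1) > 0" by (metis mult_zero_right of_nat_0 not_gr0 order_less_irrefl)
    have "alg t n = t" using assms(2) sT unfolding valid_run_def contiguous_alloc_def by blast
    thus "t \<in> agent_block (alg t) n" unfolding agent_block_def using pos by auto
  qed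
  have P3: "T \<ge> n * t \<longrightarrow> (\<forall>i\<in>{1..n}. \<exists>s\<in>{1..T}. t \<in> agent_block (alg s) i)"
  proof (intro impI ballI)
    fix i assume T: "T \<ge> n * t" and i: "i \<in> {1..n}"
    define k where "k = (t + i - 1) div i"
    have ip: "i \<ge> 1" using i by simp
    have ki: "k * i \<ge> t" and ki2: "k * i < t + i"
    proof -
      have "(t + i - 1) div i * i + (t + i - 1) mod i = t + i - 1" by simp
      moreover have "(t + i - 1) mod i < i" using ip by simp
      ultimately show "k * i \<ge> t" "k * i < t + i" unfolding k_def using ip by linarith+
    qed
    have kn: "k \<ge> n"
    proof (rule ccontr)
      assume "\<not> k \<ge> n"
      hence "k + 1 \<le> n" by simp
      hence "(k+1) * i \<le> n * i" by (rule mult_right_mono) simp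
      also have "n * i \<le> n * n" using i by simp
      also have "n * n \<le> t" using assms(3) by (simp add: power2_eq_square)
      finally show False using ki ip by simp
    qed
    have kt: "k \<le> t"
    proof -
      have "t * 1 \<le> t * i" using ip by (rule mult_left_mono) simp
      moreover have "(t+1) * i = t * i + i" by simp
      ultimately have "k * i < (t+1) * i" using ki2 by linarith
      hence "k < t + 1" using mult_less_cancel2 by blast
      thus ?thesis by simp
    qed
    have kT: "T \<ge> k * n" using kt T by (metis le_trans mult.commute mult_le_mono2)
    define r where "r = k * i - t"
    have h: "t = k * i - r \<and> r < i \<and> k \<ge> n \<and> T \<ge> k * n"
      unfolding r_def using ki ki2 kn kT by auto
    have "t \<in> agent_block (alg (k * n)) i" using P1 i h by blast
    moreover have "k * n \<in> {1..T}" using kn assms(1) kT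
      by (simp add: Suc_le_eq)
    ultimately show "\<exists>s\<in>{1..T}. t \<in> agent_block (alg s) i" by blast
  qed
  show ?thesis using P1 P2 P3 by blast
qed

end
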